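(* Let $n\ge3$, $\rho\in[0,1]$ and $\alpha\in[0,\tfrac{\pi}{2}]$. Then $$\int_{-1}^1 \frac{x^2(1-x^2)^{\frac{n-3}{2}}}{(1+\rho^2-2\rho x \cos\alpha)^{\frac{n}{2}-1}}\, {}_2 F_1\Big(\tfrac{n-2}{4}, \tfrac{n}{4};\tfrac{n-1}{2}; \tfrac{4\rho^2 \sin^2\alpha\, (1-x^2)}{(1+\rho^2-2\rho x\cos\alpha)^2}\Big)\, dx = \frac{\sin^2\alpha }{n-1}\int_{-1}^{1} (1-x^2)^{\frac{n-1}{2}} (1-2\rho x + \rho^2)^{1-\frac{n}{2}}\, dx + \cos^2\alpha \int_{-1}^1 x^2(1-x^2)^{\frac{n-3}{2}} (1-2\rho x + \rho^2)^{1-\frac{n}{2}}\, dx.$$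
   Context: ${}_2F_1$ is the Gauss hypergeometric function. *)

theory Defs
  imports "HOL-Analysis.Analysis"
begin

definition hyp2F1 :: "real \<Rightarrow> real \<Rightarrow> real \<Rightarrow> real \<Rightarrow> real" where
  "hyp2F1 a b c z =
     (\<Sum>k. pochhammer a k * pochhammer b k / (pochhammer c k * fact k) * z ^ k)"

end

theory Submission
  imports Defs
begin

lemma meas_pair_borel:
  "(h :: real \<times> real \<Rightarrow> 'b::topological_space) \<in> borel_measurable borel \<Longrightarrow> h \<in> borel_measurable (lborel \<Otimes>\<^sub>M lborel)"
  by (simp add: lborel_prod)

lemma integral_eq_nn:
  fixes f :: "real \<Rightarrow> real"
  assumes f[measurable]: "f \<in> borel_measurable borel" and S[measurable]: "S \<in> sets borel"
    and nn: "\<And>x. x \<in> S \<Longrightarrow> 0 \<le> f x"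
  shows "integral S f = enn2real (\<integral>\<^sup>+x. ennreal (f x) * indicator S x \<partial>lborel)"
proof (cases "f integrable_on S")
  case True
  then have "(f has_integral integral S f) S" by (simp add: has_integral_integral)
  from nn_integral_has_integral_lebesgue'[OF nn this]
  have "(\<integral>\<^sup>+x. ennreal (f x) * indicator S x \<partial>lborel) = ennreal (integral S f)" .
  moreover have "integral S f \<ge> 0" using True nn by (rule integral_nonneg)
  ultimately show ?thesis by simp
next
  case False
  have "(\<integral>\<^sup>+x. ennreal (f x) * indicator S x \<partial>lborel) = \<infinity>"
  proof (rule ccontr)
    assume "(\<integral>\<^sup>+x. ennreal (f x) * indicator S x \<partial>lborel) \<noteq> \<infinity>"
    then obtain r where r: "(\<integral>\<^sup>+x. ennreal (f x) * indicator S x \<partial>lborel) = ennreal r" "0 \<le> r"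
      by (metis ennreal_cases infinity_ennreal_def)
    have eq: "(\<lambda>x. ennreal (f x) * indicator S x) = (\<lambda>x. ennreal (f x * indicator S x))"
      by (auto simp: indicator_def fun_eq_iff)
    have "((\<lambda>x. f x * indicator S x) has_integral r) UNIV"
      apply (rule nn_integral_has_integral)
      using nn r eq by (auto simp: indicator_def)
    moreover have "(\<lambda>x. f x * indicator S x) = (\<lambda>x. if x \<in> S then f x else 0)"
      by (auto simp: indicator_def fun_eq_iff)
    ultimately have "((\<lambda>x. if x \<in> S then f x else 0) has_integral r) UNIV"
      by simp
    then have "(f has_integral r) S" by (simp add: has_integral_restrict_UNIV)
    with False show False by blast
  qed
  then show ?thesis using False by (simp add: not_integrable_integral)
qed

lemma shear_x:
  fixes h :: "real \<times> real \<Rightarrow> ennreal"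
  assumes [measurable]: "h \<in> borel_measurable (lborel \<Otimes>\<^sub>M lborel)"
  shows "(\<integral>\<^sup>+z. h (fst z + a * snd z, snd z) \<partial>(lborel \<Otimes>\<^sub>M lborel)) = (\<integral>\<^sup>+z. h z \<partial>(lborel \<Otimes>\<^sub>M lborel))"
proof -
  have m1: "(\<lambda>z. h (fst z + a * snd z, snd z)) \<in> borel_measurable (lborel \<Otimes>\<^sub>M lborel)"
    by measurable
  have m2: "h \<in> borel_measurable (lborel \<Otimes>\<^sub>M lborel)" by measurable
  have "(\<integral>\<^sup>+z. h (fst z + a * snd z, snd z) \<partial>(lborel \<Otimes>\<^sub>M lborel)) = (\<integral>\<^sup>+y. \<integral>\<^sup>+x. h (x + a * y, y) \<partial>lborel \<partial>lborel)"
    using lborel_pair.nn_integral_snd[OF m1] by simp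
  also have "\<dots> = (\<integral>\<^sup>+y. \<integral>\<^sup>+x. h (x, y) \<partial>lborel \<partial>lborel)"
  proof (rule nn_integral_cong)
    fix y :: real
    show "(\<integral>\<^sup>+x. h (x + a * y, y) \<partial>lborel) = (\<integral>\<^sup>+x. h (x, y) \<partial>lborel)"
      using nn_integral_real_affine[of "\<lambda>x. h (x, y)" 1 "a * y"] by (simp add: add.commute)
  qed
  also have "\<dots> = (\<integral>\<^sup>+z. h z \<partial>(lborel \<Otimes>\<^sub>M lborel))"
    using lborel_pair.nn_integral_snd[OF m2] by simp
  finally show ?thesis .
qed

lemma shear_y:
  fixes h :: "real \<times> real \<Rightarrow> ennreal"
  assumes [measurable]: "h \<in> borel_measurable (lborel \<Otimes>\<^sub>M lborel)"
  shows "(\<integral>\<^sup>+z. h (fst z, snd z + b * fst z) \<partial>(lborel \<Otimes>\<^sub>M lborel)) = (\<integral>\<^sup>+z. h z \<partial>(lborel \<Otimes>\<^sub>M lborel))"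
proof -
  have m1: "(\<lambda>z. h (fst z, snd z + b * fst z)) \<in> borel_measurable (lborel \<Otimes>\<^sub>M lborel)"
    by measurable
  have m2: "h \<in> borel_measurable (lborel \<Otimes>\<^sub>M lborel)" by measurable
  have "(\<integral>\<^sup>+z. h (fst z, snd z + b * fst z) \<partial>(lborel \<Otimes>\<^sub>M lborel)) = (\<integral>\<^sup>+x. \<integral>\<^sup>+y. h (x, y + b * x) \<partial>lborel \<partial>lborel)"
    using lborel.nn_integral_fst[OF m1] by simp
  also have "\<dots> = (\<integral>\<^sup>+x. \<integral>\<^sup>+y. h (x, y) \<partial>lborel \<partial>lborel)"
  proof (rule nn_integral_cong)
    fix x :: real
    show "(\<integral>\<^sup>+y. h (x, y + b * x) \<partial>lborel) = (\<integral>\<^sup>+y. h (x, y) \<partial>lborel)"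
      using nn_integral_real_affine[of "\<lambda>y. h (x, y)" 1 "b * x"] by (simp add: add.commute)
  qed
  also have "\<dots> = (\<integral>\<^sup>+z. h z \<partial>(lborel \<Otimes>\<^sub>M lborel))"
    using lborel.nn_integral_fst[OF m2] by simp
  finally show ?thesis .
qed

lemma refl_y:
  fixes h :: "real \<times> real \<Rightarrow> ennreal"
  assumes [measurable]: "h \<in> borel_measurable (lborel \<Otimes>\<^sub>M lborel)"
  shows "(\<integral>\<^sup>+z. h (fst z, - snd z) \<partial>(lborel \<Otimes>\<^sub>M lborel)) = (\<integral>\<^sup>+z. h z \<partial>(lborel \<Otimes>\<^sub>M lborel))"
proof -
  have m1: "(\<lambda>z. h (fst z, - snd z)) \<in> borel_measurable (lborel \<Otimes>\<^sub>M lborel)"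
    by measurable
  have m2: "h \<in> borel_measurable (lborel \<Otimes>\<^sub>M lborel)" by measurable
  have "(\<integral>\<^sup>+z. h (fst z, - snd z) \<partial>(lborel \<Otimes>\<^sub>M lborel)) = (\<integral>\<^sup>+x. \<integral>\<^sup>+y. h (x, - y) \<partial>lborel \<partial>lborel)"
    using lborel.nn_integral_fst[OF m1] by simp
  also have "\<dots> = (\<integral>\<^sup>+x. \<integral>\<^sup>+y. h (x, y) \<partial>lborel \<partial>lborel)"
  proof (rule nn_integral_cong)
    fix x :: real
    show "(\<integral>\<^sup>+y. h (x, - y) \<partial>lborel) = (\<integral>\<^sup>+y. h (x, y) \<partial>lborel)"
      using nn_integral_real_affine[of "\<lambda>y. h (x, y)" "-1" 0] by simp
  qed
  also have "\<dots> = (\<integral>\<^sup>+z. h z \<partial>(lborel \<Otimes>\<^sub>M lborel))"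
    using lborel.nn_integral_fst[OF m2] by simp
  finally show ?thesis .
qed

lemma rotation_inv:
  fixes h :: "real \<times> real \<Rightarrow> ennreal" and c s :: real
  assumes [measurable]: "h \<in> borel_measurable (lborel \<Otimes>\<^sub>M lborel)"
    and cs: "c\<^sup>2 + s\<^sup>2 = 1" and s: "s \<noteq> 0"
  shows "(\<integral>\<^sup>+z. h (fst z * c - snd z * s, fst z * s + snd z * c) \<partial>(lborel \<Otimes>\<^sub>M lborel))
       = (\<integral>\<^sup>+z. h z \<partial>(lborel \<Otimes>\<^sub>M lborel))"
proof -
  define a where "a = (c - 1) / s"
  have 1: "1 + a * s = c" using s by (simp add: a_def field_simps)
  have 2: "2 * a + a * a * s = - s"
  proof -
    have "(2 * a + a * a * s) * s = (c - 1) * (c + 1)" using s by (simp add: a_def field_simps power2_eq_square)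
    also have "\<dots> = (- s) * s" using cs by (simp add: algebra_simps power2_eq_square)
    finally show ?thesis using s by (metis mult_right_cancel)
  qed
  have T: "(fst z * c - snd z * s, fst z * s + snd z * c) =
     (\<lambda>w. (fst w + a * snd w, snd w)) ((\<lambda>w. (fst w, snd w + s * fst w)) ((\<lambda>w. (fst w + a * snd w, snd w)) z))" for z
  proof -
    have "fst z * c - snd z * s = fst z * (1 + a * s) + snd z * (2 * a + a * a * s)" by (simp add: 1 2)
    moreover have "fst z * s + snd z * c = s * fst z + snd z * (1 + a * s)" by (simp add: 1)
    ultimately show ?thesis by (simp add: algebra_simps)
  qed
  have "(\<integral>\<^sup>+z. h (fst z * c - snd z * s, fst z * s + snd z * c) \<partial>(lborel \<Otimes>\<^sub>M lborel))
     = (\<integral>\<^sup>+z. (\<lambda>w. h (fst w + a * (snd w + s * fst w), snd w + s * fst w)) (fst z + a * snd z, snd z) \<partial>(lborel \<Otimes>\<^sub>M lborel))"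
    by (subst T) simp
  also have "\<dots> = (\<integral>\<^sup>+z. h (fst z + a * (snd z + s * fst z), snd z + s * fst z) \<partial>(lborel \<Otimes>\<^sub>M lborel))"
    by (rule shear_x) measurable
  also have "\<dots> = (\<integral>\<^sup>+z. (\<lambda>w. h (fst w + a * snd w, snd w)) (fst z, snd z + s * fst z) \<partial>(lborel \<Otimes>\<^sub>M lborel))"
    by simp
  also have "\<dots> = (\<integral>\<^sup>+z. h (fst z + a * snd z, snd z) \<partial>(lborel \<Otimes>\<^sub>M lborel))"
    by (rule shear_y) measurable
  also have "\<dots> = (\<integral>\<^sup>+z. h z \<partial>(lborel \<Otimes>\<^sub>M lborel))"
    by (rule shear_x) measurable
  finally show ?thesis .
qed

lemma even_binom:
  fixes m w :: real
  assumes w: "\<bar>w\<bar> < 1"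
  shows "(\<lambda>j. 2 * (pochhammer m (2*j) / fact (2*j)) * w^(2*j)) sums ((1-w) powr (-m) + (1+w) powr (-m))"
proof -
  have A: "(\<lambda>k. ((-m) gchoose k) * (-w)^k) sums (1 + -w) powr (-m)"
    by (rule gen_binomial_real) (use w in simp)
  have B: "(\<lambda>k. ((-m) gchoose k) * w^k) sums (1 + w) powr (-m)"
    by (rule gen_binomial_real) (use w in simp)
  define f where "f k = pochhammer m k / fact k * (w^k + (-w)^k)" for k
  have feq: "((-m) gchoose k) * (-w)^k + ((-m) gchoose k) * w^k = f k" for k
  proof -
    have "((-m) gchoose k) = (-1)^k * pochhammer m k / fact k"
      by (simp add: gbinomial_pochhammer)
    moreover have "(-1::real)^k * (-w)^k = w^k" by (simp flip: power_mult_distrib)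
    moreover have "(-1::real)^k * w^k = (-w)^k" by (simp flip: power_mult_distrib)
    ultimately show ?thesis unfolding f_def
      by (simp add: algebra_simps)
  qed
  have "(\<lambda>k. f k) sums ((1-w) powr (-m) + (1+w) powr (-m))"
    using sums_add[OF A B] feq by simp
  from sums_group[OF this, of 2]
  have "(\<lambda>j. sum f {j * 2..<j * 2 + 2}) sums ((1-w) powr (-m) + (1+w) powr (-m))" by simp
  moreover have "sum f {j * 2..<j * 2 + 2} = 2 * (pochhammer m (2*j) / fact (2*j)) * w^(2*j)" for j
  proof -
    have "{j * 2..<j * 2 + 2} = {2*j, Suc (2*j)}" by auto
    moreover have "f (Suc (2*j)) = 0" by (simp add: f_def)
    moreover have "f (2*j) = 2 * (pochhammer m (2*j) / fact (2*j)) * w^(2*j)"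
      by (simp add: f_def power_mult)
    ultimately show ?thesis by simp
  qed
  ultimately show ?thesis by simp
qed

lemma coeff_ident:
  fixes m :: real
  shows "pochhammer m (2*j) / fact (2*j) * pochhammer (1/2) j
       = pochhammer (m/2) j * pochhammer ((m+1)/2) j / fact j"
proof -
  have 1: "pochhammer m (2*j) = 2^(2*j) * pochhammer (m/2) j * pochhammer ((m+1)/2) j"
    using pochhammer_double[of "m/2" j] by (simp add: add_divide_distrib)
  have 2: "fact (2*j) = (2^(2*j) * pochhammer (1 / 2) j * fact j :: real)"
    by (rule fact_double)
  have "pochhammer (1/2::real) j \<noteq> 0"
    by (simp add: pochhammer_eq_0_iff)
  then show ?thesis unfolding 1 2 by (simp add: field_simps)
qed

lemma sq_powr: "x > 0 \<Longrightarrow> (x^2) powr (real j - 1/2) = x^(2*j) / (x::real)"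
proof -
  assume x: "x > 0"
  have "x^2 = x powr 2" using x by (simp add: powr_numeral)
  then have "(x^2) powr (real j - 1/2) = x powr (2 * (real j - 1/2))" by (simp add: powr_powr)
  also have "\<dots> = x powr (real (2*j)) / x powr 1" by (subst powr_diff[symmetric]) (simp add: algebra_simps)
  also have "\<dots> = x^(2*j) / x" using x by (simp only: powr_realpow powr_one_gt_zero_iff) simp
  finally show ?thesis .
qed

lemma moment:
  fixes p :: real and j :: nat
  assumes p: "p > -1"
  shows "(\<integral>\<^sup>+t. ennreal (t^(2*j) * (1 - t\<^sup>2) powr p) * indicator {-1<..<1} t \<partial>lborel)
       = ennreal (Beta (real j + 1/2) (p+1))"
proof -
  define F where "F t = ennreal (t^(2*j) * (1 - t\<^sup>2) powr p)" for t :: real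
  have [measurable]: "F \<in> borel_measurable borel" unfolding F_def by measurable
  have Fm: "F (-t) = F t" for t by (simp add: F_def)
  have "AE t in lborel. F t * indicator {-1<..<1} t = F t * indicator {-1..0} t + F t * indicator {0..1} t"
    using AE_lborel_singleton[of "-1"] AE_lborel_singleton[of 0] AE_lborel_singleton[of 1]
    by eventually_elim (auto simp: indicator_def)
  then have "(\<integral>\<^sup>+t. F t * indicator {-1<..<1} t \<partial>lborel)
      = (\<integral>\<^sup>+t. F t * indicator {-1..0} t + F t * indicator {0..1} t \<partial>lborel)"
    by (rule nn_integral_cong_AE)
  also have "\<dots> = (\<integral>\<^sup>+t. F t * indicator {-1..0} t \<partial>lborel) + (\<integral>\<^sup>+t. F t * indicator {0..1} t \<partial>lborel)"
    by (rule nn_integral_add) measurable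
  also have "(\<integral>\<^sup>+t. F t * indicator {-1..0} t \<partial>lborel) = (\<integral>\<^sup>+t. F t * indicator {0..1} t \<partial>lborel)"
  proof -
    have "(\<integral>\<^sup>+t. F t * indicator {-1..0} t \<partial>lborel) = (\<integral>\<^sup>+t. F (0 + -1 * t) * indicator {-1..0} (0 + -1 * t) \<partial>lborel)"
      using nn_integral_real_affine[of "\<lambda>t. F t * indicator {-1..0} t" "-1" 0] by simp
    also have "\<dots> = (\<integral>\<^sup>+t. F t * indicator {0..1} t \<partial>lborel)"
      by (rule nn_integral_cong) (auto simp: Fm indicator_def)
    finally show ?thesis .
  qed
  finally have 1: "(\<integral>\<^sup>+t. F t * indicator {-1<..<1} t \<partial>lborel) = 2 * (\<integral>\<^sup>+t. F t * indicator {0..1} t \<partial>lborel)"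
    by (simp add: mult_2)
  define f where "f v = v powr (real j - 1/2) * (1 - v) powr p" for v :: real
  have [measurable]: "f \<in> borel_measurable borel" unfolding f_def by measurable
  have sbm: "set_borel_measurable borel {0..1} f" unfolding set_borel_measurable_def by measurable
  have sub: "(\<integral>\<^sup>+x. f x * indicator {(\<lambda>x. x^2) 0..(\<lambda>x. x^2) 1} x \<partial>lborel) =
             (\<integral>\<^sup>+x. f ((\<lambda>x. x^2) x) * (2 * x) * indicator {0..1} x \<partial>lborel)"
    by (rule nn_integral_substitution[where g' = "\<lambda>x. 2 * x"])
       (use sbm in \<open>auto intro!: derivative_eq_intros continuous_intros\<close>)
  have "(\<integral>\<^sup>+x. f ((\<lambda>x. x^2) x) * (2 * x) * indicator {0..1} x \<partial>lborel)
      = (\<integral>\<^sup>+x. 2 * (F x * indicator {0..1} x) \<partial>lborel)"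
  proof (rule nn_integral_cong_AE)
    show "AE x in lborel. ennreal (f ((\<lambda>x. x^2) x) * (2 * x) * indicator {0..1} x) = 2 * (F x * indicator {0..1} x)"
      using AE_lborel_singleton[of 0]
    proof eventually_elim
      case (elim x)
      show ?case
      proof (cases "x \<in> {0..1}")
        case True
        with elim have x: "x > 0" "x \<le> 1" by auto
        have "(x^2) powr (real j - 1/2) = x^(2*j) / x" using x(1) by (rule sq_powr)
        then have eq: "f (x^2) * (2 * x) = 2 * (x^(2*j) * (1 - x\<^sup>2) powr p)"
          using x by (simp add: f_def field_simps)
        have "ennreal (f (x^2) * (2 * x)) = ennreal (2 * (x^(2*j) * (1 - x\<^sup>2) powr p))"
          by (simp only: eq)
        also have "\<dots> = 2 * F x" unfolding F_def using x by (simp add: ennreal_mult)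
        finally show ?thesis using True by simp
      qed simp
    qed
  qed
  also have "\<dots> = 2 * (\<integral>\<^sup>+t. F t * indicator {0..1} t \<partial>lborel)"
    by (rule nn_integral_cmult) measurable
  finally have 2: "(\<integral>\<^sup>+x. f x * indicator {0..1} x \<partial>lborel) = 2 * (\<integral>\<^sup>+t. F t * indicator {0..1} t \<partial>lborel)"
    using sub by simp
  have "((\<lambda>t. t powr ((real j + 1/2) - 1) * (1 - t) powr ((p+1) - 1)) has_integral Beta (real j + 1/2) (p+1)) {0..1}"
    by (rule has_integral_Beta_real) (use p in auto)
  then have "(f has_integral Beta (real j + 1/2) (p+1)) {0..1}"
    by (simp add: f_def[abs_def])
  from nn_integral_has_integral_lebesgue'[OF _ this]
  have 3: "(\<integral>\<^sup>+x. ennreal (f x) * indicator {0..1} x \<partial>lborel) = ennreal (Beta (real j + 1/2) (p+1))"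
    by (simp add: f_def)
  have 4: "(\<integral>\<^sup>+x. f x * indicator {0..1} x \<partial>lborel) = (\<integral>\<^sup>+x. ennreal (f x) * indicator {0..1} x \<partial>lborel)"
    by (rule nn_integral_cong) (simp add: indicator_def)
  show ?thesis using 1 2 3 4 F_def by simp
qed

lemma Beta_ratio:
  fixes p :: real assumes p: "p > -1"
  shows "Beta (real j + 1/2) (p+1) = Beta (1/2) (p+1) * pochhammer (1/2) j / pochhammer (p + 3/2) j"
proof -
  have h1: "(1/2::real) \<notin> \<int>\<^sub>\<le>\<^sub>0" using nonpos_Ints_nonpos by fastforce
  have h2: "(p + 3/2::real) \<notin> \<int>\<^sub>\<le>\<^sub>0" using p nonpos_Ints_nonpos by fastforce
  have g1: "Gamma (real j + 1/2) = pochhammer (1/2) j * Gamma (1/2)"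
  proof -
    have "Gamma (1/2::real) > 0" by (rule Gamma_real_pos) simp
    then have G: "Gamma (1/2::real) \<noteq> 0" by (metis less_irrefl)
    show ?thesis using G using pochhammer_Gamma[OF h1, of j] by (simp add: add.commute field_simps)
  qed
  have g2: "Gamma (real j + 1/2 + (p+1)) = pochhammer (p + 3/2) j * Gamma (p + 3/2)"
  proof -
    have "Gamma (p + 3/2) > 0" using p by (intro Gamma_real_pos) simp
    then have G: "Gamma (p + 3/2) \<noteq> 0" by (metis less_irrefl)
    show ?thesis using G pochhammer_Gamma[OF h2, of j] p by (simp add: algebra_simps field_simps)
  qed
  have pos: "Gamma (p + 3/2) > 0" "pochhammer (p + 3/2) j > 0" using p
    by (auto intro!: pochhammer_pos)
  show ?thesis unfolding Beta_def g1 g2 using pos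
    by (simp add: field_simps)
qed

lemma t_series:
  fixes m p u :: real
  assumes m: "m > 0" and p: "p > -1" and u: "0 \<le> u" "u < 1"
  shows "(\<integral>\<^sup>+t. ennreal ((1 - t\<^sup>2) powr p * (1 - u*t) powr (-m)) * indicator {-1<..<1} t \<partial>lborel)
        = ennreal (Beta (1/2) (p+1) * hyp2F1 (m/2) ((m+1)/2) (p + 3/2) (u\<^sup>2))
       \<and> 0 \<le> hyp2F1 (m/2) ((m+1)/2) (p + 3/2) (u\<^sup>2)"
proof -
  define G where "G t = ennreal ((1 - t\<^sup>2) powr p * (1 - u*t) powr (-m)) * indicator {-1<..<1} t" for t :: real
  define Gm where "Gm t = ennreal ((1 - t\<^sup>2) powr p * (1 + u*t) powr (-m)) * indicator {-1<..<1} t" for t :: real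
  define e where "e j = pochhammer m (2*j) / fact (2*j)" for j
  define Bt where "Bt = Beta (1/2) (p+1)"
  define h where "h j = pochhammer (m/2) j * pochhammer ((m+1)/2) j / (pochhammer (p + 3/2) j * fact j)" for j
  define M where "M j t = ennreal (t^(2*j) * (1 - t\<^sup>2) powr p) * indicator {-1<..<1} t" for j and t :: real
  have [measurable]: "G \<in> borel_measurable borel" "Gm \<in> borel_measurable borel"
    unfolding G_def Gm_def by measurable
  have Mm[measurable]: "M j \<in> borel_measurable borel" for j unfolding M_def by measurable
  have e_nn: "e j \<ge> 0" for j unfolding e_def using m by (simp add: pochhammer_nonneg)
  have Bt_pos: "Bt > 0" unfolding Bt_def Beta_def using p by simp
  have hnn: "0 \<le> Bt * (h j * (u\<^sup>2)^j)" for j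
    unfolding h_def using Bt_pos m p by (auto intro!: mult_nonneg_nonneg divide_nonneg_pos pochhammer_nonneg pochhammer_pos mult_pos_pos)
  have "(\<integral>\<^sup>+t. G t \<partial>lborel) = (\<integral>\<^sup>+t. G (0 + -1 * t) \<partial>lborel)"
    using nn_integral_real_affine[of G "-1" 0] by simp
  also have "\<dots> = (\<integral>\<^sup>+t. Gm t \<partial>lborel)"
    by (rule nn_integral_cong) (auto simp: G_def Gm_def indicator_def)
  finally have refl: "(\<integral>\<^sup>+t. G t \<partial>lborel) = (\<integral>\<^sup>+t. Gm t \<partial>lborel)" .
  have pt: "G t + Gm t = (\<Sum>j. ennreal (2 * e j * u^(2*j)) * M j t)" for t
  proof (cases "t \<in> {-1<..<1}")
    case True
    then have ut: "\<bar>u * t\<bar> < 1" using u by (auto simp: abs_mult abs_less_iff intro: mult_le_less_imp_less) (smt (verit, best) mult_le_cancel_left1 mult_minus_right)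
    have s: "(\<lambda>j. 2 * e j * (u*t)^(2*j)) sums ((1 - u*t) powr (-m) + (1 + u*t) powr (-m))"
      using even_binom[OF ut, of m] by (simp add: e_def)
    have tp: "(1 - t\<^sup>2) powr p \<ge> 0" by simp
    have s2: "(\<lambda>j. (2 * e j * u^(2*j)) * (t^(2*j) * (1 - t\<^sup>2) powr p)) sums
               ((1 - t\<^sup>2) powr p * ((1 - u*t) powr (-m) + (1 + u*t) powr (-m)))"
      using sums_mult[OF s, of "(1 - t\<^sup>2) powr p"] by (simp add: power_mult_distrib mult_ac)
    have "G t + Gm t = ennreal ((1 - t\<^sup>2) powr p * ((1 - u*t) powr (-m) + (1 + u*t) powr (-m)))"
      using True by (simp add: G_def Gm_def ennreal_plus[symmetric] ring_distribs del: ennreal_plus)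
    also have "\<dots> = (\<Sum>j. ennreal ((2 * e j * u^(2*j)) * (t^(2*j) * (1 - t\<^sup>2) powr p)))"
      by (rule suminf_ennreal_eq[symmetric, OF _ s2]) (use e_nn u in simp)
    also have "\<dots> = (\<Sum>j. ennreal (2 * e j * u^(2*j)) * M j t)"
      using True e_nn u by (simp add: M_def ennreal_mult)
    finally show ?thesis .
  qed (simp add: G_def Gm_def M_def)
  have "(\<integral>\<^sup>+t. G t \<partial>lborel) + (\<integral>\<^sup>+t. Gm t \<partial>lborel) = (\<integral>\<^sup>+t. G t + Gm t \<partial>lborel)"
    by (rule nn_integral_add[symmetric]) measurable
  also have "\<dots> = (\<integral>\<^sup>+t. (\<Sum>j. ennreal (2 * e j * u^(2*j)) * M j t) \<partial>lborel)"
    by (simp add: pt)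
  also have "\<dots> = (\<Sum>j. (\<integral>\<^sup>+t. ennreal (2 * e j * u^(2*j)) * M j t \<partial>lborel))"
    by (rule nn_integral_suminf) measurable
  also have "\<dots> = (\<Sum>j. ennreal (2 * e j * u^(2*j)) * ennreal (Beta (real j + 1/2) (p+1)))"
    by (simp add: nn_integral_cmult M_def moment[OF p])
  also have "\<dots> = (\<Sum>j. 2 * ennreal (Bt * (h j * (u\<^sup>2)^j)))"
  proof (rule suminf_cong)
    fix j
    have "e j * pochhammer (1/2) j = pochhammer (m/2) j * pochhammer ((m+1)/2) j / fact j"
      unfolding e_def by (rule coeff_ident)
    moreover have "pochhammer (p + 3/2) j > 0" using p by (intro pochhammer_pos) simp
    ultimately have "e j * u^(2*j) * Beta (real j + 1/2) (p+1) = Bt * (h j * (u\<^sup>2)^j)"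
    proof -
      assume eq: "e j * pochhammer (1/2) j = pochhammer (m/2) j * pochhammer ((m+1)/2) j / fact j"
        and Q: "pochhammer (p + 3/2) j > 0"
      have uu: "u^(2*j) = (u^2)^j" by (simp add: power_mult)
      have "e j * u^(2*j) * Beta (real j + 1/2) (p+1) = Bt * (u\<^sup>2)^j * (e j * pochhammer (1/2) j) / pochhammer (p + 3/2) j"
        unfolding Beta_ratio[OF p] Bt_def uu by (simp add: field_simps)
      also have "\<dots> = Bt * (u\<^sup>2)^j * (pochhammer (m/2) j * pochhammer ((m+1)/2) j / fact j) / pochhammer (p + 3/2) j"
        by (simp only: eq)
      also have "\<dots> = Bt * (h j * (u\<^sup>2)^j)" unfolding h_def by (simp add: field_simps)
      finally show ?thesis .
    qed
    then have Z: "2 * e j * u^(2*j) * Beta (real j + 1/2) (p+1) = 2 * (Bt * (h j * (u\<^sup>2)^j))"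
      by simp
    have bnn: "Beta (real j + 1/2) (p+1) \<ge> 0" using p by (simp add: Beta_def)
    have "ennreal (2 * e j * u^(2*j)) * ennreal (Beta (real j + 1/2) (p+1))
        = ennreal (2 * e j * u^(2*j) * Beta (real j + 1/2) (p+1))"
      using e_nn u bnn by (simp add: ennreal_mult)
    also have "\<dots> = ennreal (2 * (Bt * (h j * (u\<^sup>2)^j)))" by (simp only: Z)
    also have "\<dots> = 2 * ennreal (Bt * (h j * (u\<^sup>2)^j))" using hnn[of j] by (simp add: ennreal_mult)
    finally show "ennreal (2 * e j * u^(2*j)) * ennreal (Beta (real j + 1/2) (p+1)) = 2 * ennreal (Bt * (h j * (u\<^sup>2)^j))" .
  qed
  also have "\<dots> = 2 * (\<Sum>j. ennreal (Bt * (h j * (u\<^sup>2)^j)))" by simp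
  finally have "2 * (\<integral>\<^sup>+t. G t \<partial>lborel) = 2 * (\<Sum>j. ennreal (Bt * (h j * (u\<^sup>2)^j)))"
    using refl by (simp add: mult_2)
  then have I: "(\<integral>\<^sup>+t. G t \<partial>lborel) = (\<Sum>j. ennreal (Bt * (h j * (u\<^sup>2)^j)))"
    by (simp add: ennreal_mult_cancel_left)
  have "(\<integral>\<^sup>+t. G t \<partial>lborel) \<le> (\<integral>\<^sup>+t. ennreal ((1 - u) powr (-m)) * M 0 t \<partial>lborel)"
  proof (rule nn_integral_mono)
    fix t :: real
    show "G t \<le> ennreal ((1 - u) powr (-m)) * M 0 t"
    proof (cases "t \<in> {-1<..<1}")
      case True
      then have "u * t \<le> u" using u by (simp add: mult_left_le)
      then have "(1 - u*t) powr (-m) \<le> (1 - u) powr (-m)"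
        using u m by (intro powr_mono2') auto
      then have "(1 - t\<^sup>2) powr p * (1 - u*t) powr (-m) \<le> (1 - u) powr (-m) * (1 - t\<^sup>2) powr p"
        by (subst mult.commute) (rule mult_right_mono, simp_all)
      then show ?thesis using True by (simp add: G_def M_def ennreal_mult[symmetric] del: ennreal_mult)
    qed (simp add: G_def M_def)
  qed
  also have "\<dots> = ennreal ((1 - u) powr (-m)) * ennreal (Beta (1/2) (p+1))"
    using moment[OF p, of 0] by (simp add: nn_integral_cmult M_def)
  also have "\<dots> < top" by (simp add: ennreal_mult_less_top)
  finally have fin: "(\<Sum>j. ennreal (Bt * (h j * (u\<^sup>2)^j))) \<noteq> top" using I by simp
  have sm: "summable (\<lambda>j. Bt * (h j * (u\<^sup>2)^j))" by (rule summable_suminf_not_top[OF hnn fin])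
  then have sm2: "summable (\<lambda>j. h j * (u\<^sup>2)^j)" using Bt_pos by (simp add: summable_cmult_iff)
  have "(\<integral>\<^sup>+t. G t \<partial>lborel) = ennreal (\<Sum>j. Bt * (h j * (u\<^sup>2)^j))"
    using I suminf_ennreal2[OF hnn sm] by simp
  also have "(\<Sum>j. Bt * (h j * (u\<^sup>2)^j)) = Bt * (\<Sum>j. h j * (u\<^sup>2)^j)"
    by (rule suminf_mult[OF sm2])
  also have "(\<Sum>j. h j * (u\<^sup>2)^j) = hyp2F1 (m/2) ((m+1)/2) (p + 3/2) (u\<^sup>2)"
    unfolding hyp2F1_def h_def ..
  finally have "(\<integral>\<^sup>+t. G t \<partial>lborel) = ennreal (Bt * hyp2F1 (m/2) ((m+1)/2) (p + 3/2) (u\<^sup>2))" .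
  moreover have "0 \<le> (\<Sum>j. h j * (u\<^sup>2)^j)"
    by (rule suminf_nonneg[OF sm2]) (use hnn Bt_pos in \<open>simp add: zero_le_mult_iff\<close>)
  ultimately show ?thesis unfolding G_def Bt_def hyp2F1_def h_def by simp
qed

lemma scale_int:
  fixes g :: "real \<Rightarrow> ennreal" and r :: real
  assumes r: "r > 0" and [measurable]: "g \<in> borel_measurable borel"
  shows "(\<integral>\<^sup>+y. g y * indicator {-r<..<r} y \<partial>lborel) = ennreal r * (\<integral>\<^sup>+t. g (r*t) * indicator {-1<..<1} t \<partial>lborel)"
proof -
  have "(\<integral>\<^sup>+y. g y * indicator {-r<..<r} y \<partial>lborel) = ennreal \<bar>r\<bar> * (\<integral>\<^sup>+t. g (0 + r*t) * indicator {-r<..<r} (0 + r*t) \<partial>lborel)"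
    using nn_integral_real_affine[of "\<lambda>y. g y * indicator {-r<..<r} y" r 0] r by simp
  also have "(\<integral>\<^sup>+t. g (0 + r*t) * indicator {-r<..<r} (0 + r*t) \<partial>lborel) = (\<integral>\<^sup>+t. g (r*t) * indicator {-1<..<1} t \<partial>lborel)"
  proof (rule nn_integral_cong)
    fix t :: real
    have "(r * t \<in> {-r<..<r}) = (t \<in> {-1<..<1})" using r
    proof -
      have "r * t < r \<longleftrightarrow> t < 1" using mult_less_cancel_left_pos[OF r, of t 1] by simp
      moreover have "-r < r * t \<longleftrightarrow> -1 < t" using mult_less_cancel_left_pos[OF r, of "-1" t] by simp
      ultimately show ?thesis by auto
    qed
    then show "g (0 + r*t) * indicator {-r<..<r} (0 + r*t) = g (r*t) * indicator {-1<..<1} t"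
      by (simp add: indicator_def)
  qed
  finally show ?thesis using r by simp
qed

lemma slice:
  fixes m p \<rho> c s x :: real
  assumes m: "m > 0" and p: "p = m - 1" and \<rho>: "0 \<le> \<rho>" "\<rho> \<le> 1" and cs: "c\<^sup>2 + s\<^sup>2 = 1" and s: "s \<ge> 0"
    and x: "-1 < x" "x < 1"
    and lt: "2 * \<rho> * s * sqrt (1 - x\<^sup>2) < 1 - 2 * \<rho> * (x * c) + \<rho>\<^sup>2"
  shows "(\<integral>\<^sup>+y. ennreal ((1 - x\<^sup>2 - y\<^sup>2) powr p * (1 - 2 * \<rho> * (x * c + y * s) + \<rho>\<^sup>2) powr (-m) * x\<^sup>2)
              * indicator {-sqrt (1 - x\<^sup>2)<..<sqrt (1 - x\<^sup>2)} y \<partial>lborel)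
       = ennreal ((1 - x\<^sup>2) powr (p + 1/2) * (1 - 2 * \<rho> * (x * c) + \<rho>\<^sup>2) powr (-m) * x\<^sup>2 * Beta (1/2) (p+1)
             * hyp2F1 (m/2) ((m+1)/2) (p + 3/2) ((2 * \<rho> * s * sqrt (1 - x\<^sup>2) / (1 - 2 * \<rho> * (x * c) + \<rho>\<^sup>2))\<^sup>2))"
proof -
  define r where "r = sqrt (1 - x\<^sup>2)"
  define D where "D = 1 - 2 * \<rho> * (x * c) + \<rho>\<^sup>2"
  define u where "u = 2 * \<rho> * s * r / D"
  have x2: "x\<^sup>2 < 1" using x by (simp add: abs_less_iff abs_square_less_1)
  have r: "r > 0" unfolding r_def using x2 by simp
  have r2: "r\<^sup>2 = 1 - x\<^sup>2" unfolding r_def using x2 by simp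
  have D: "D > 0" using lt \<rho> s r unfolding D_def r_def[symmetric]
    by (smt (verit) mult_nonneg_nonneg)
  have u0: "u \<ge> 0" unfolding u_def using \<rho> s r D by simp
  have u1: "u < 1" unfolding u_def using lt D by (simp add: D_def r_def)
  define C where "C = (r\<^sup>2) powr p * D powr (-m) * x\<^sup>2"
  have C0: "C \<ge> 0" unfolding C_def by simp
  have pm: "p > -1" using p m by simp
  have [measurable]: "(\<lambda>y. ennreal ((1 - x\<^sup>2 - y\<^sup>2) powr p * (1 - 2 * \<rho> * (x * c + y * s) + \<rho>\<^sup>2) powr (-m) * x\<^sup>2)) \<in> borel_measurable borel"
    by measurable
  have "(\<integral>\<^sup>+y. ennreal ((1 - x\<^sup>2 - y\<^sup>2) powr p * (1 - 2 * \<rho> * (x * c + y * s) + \<rho>\<^sup>2) powr (-m) * x\<^sup>2)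
              * indicator {-r<..<r} y \<partial>lborel)
     = ennreal r * (\<integral>\<^sup>+t. ennreal ((1 - x\<^sup>2 - (r*t)\<^sup>2) powr p * (1 - 2 * \<rho> * (x * c + (r*t) * s) + \<rho>\<^sup>2) powr (-m) * x\<^sup>2)
              * indicator {-1<..<1} t \<partial>lborel)"
    by (rule scale_int[OF r]) measurable
  also have "(\<integral>\<^sup>+t. ennreal ((1 - x\<^sup>2 - (r*t)\<^sup>2) powr p * (1 - 2 * \<rho> * (x * c + (r*t) * s) + \<rho>\<^sup>2) powr (-m) * x\<^sup>2)
              * indicator {-1<..<1} t \<partial>lborel)
     = (\<integral>\<^sup>+t. ennreal C * (ennreal ((1 - t\<^sup>2) powr p * (1 - u*t) powr (-m)) * indicator {-1<..<1} t) \<partial>lborel)"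
  proof (rule nn_integral_cong)
    fix t :: real
    show "ennreal ((1 - x\<^sup>2 - (r*t)\<^sup>2) powr p * (1 - 2 * \<rho> * (x * c + (r*t) * s) + \<rho>\<^sup>2) powr (-m) * x\<^sup>2)
              * indicator {-1<..<1} t
        = ennreal C * (ennreal ((1 - t\<^sup>2) powr p * (1 - u*t) powr (-m)) * indicator {-1<..<1} t)"
    proof (cases "t \<in> {-1<..<1}")
      case True
      then have t: "\<bar>t\<bar> < 1" by auto
      have "u * t \<le> u * \<bar>t\<bar>" using u0 by (intro mult_left_mono) auto
      moreover have "u * \<bar>t\<bar> \<le> \<bar>t\<bar>" using u0 u1 by (intro mult_left_le_one_le) auto
      ultimately have ut: "u * t < 1" using t by linarith
      have e1: "1 - x\<^sup>2 - (r*t)\<^sup>2 = r\<^sup>2 * (1 - t\<^sup>2)" using r2 by (simp add: algebra_simps power_mult_distrib)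
      have e2: "1 - 2 * \<rho> * (x * c + (r*t) * s) + \<rho>\<^sup>2 = D * (1 - u*t)"
        unfolding u_def D_def using D by (simp add: D_def field_simps)
      have t2: "1 - t\<^sup>2 \<ge> 0" using t by (simp add: abs_square_le_1 less_imp_le)
      have "(1 - x\<^sup>2 - (r*t)\<^sup>2) powr p * (1 - 2 * \<rho> * (x * c + (r*t) * s) + \<rho>\<^sup>2) powr (-m) * x\<^sup>2
          = C * ((1 - t\<^sup>2) powr p * (1 - u*t) powr (-m))"
        unfolding e1 e2 C_def using D ut t2 by (simp add: powr_mult)
      then show ?thesis using True C0 by (simp add: ennreal_mult mult.assoc)
    qed simp
  qed
  also have "\<dots> = ennreal C * (\<integral>\<^sup>+t. ennreal ((1 - t\<^sup>2) powr p * (1 - u*t) powr (-m)) * indicator {-1<..<1} t \<partial>lborel)"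
    by (rule nn_integral_cmult) measurable
  also have "\<dots> = ennreal C * ennreal (Beta (1/2) (p+1) * hyp2F1 (m/2) ((m+1)/2) (p + 3/2) (u\<^sup>2))"
    by (simp only: t_series[OF m pm u0 u1, THEN conjunct1])
  finally have 1: "(\<integral>\<^sup>+y. ennreal ((1 - x\<^sup>2 - y\<^sup>2) powr p * (1 - 2 * \<rho> * (x * c + y * s) + \<rho>\<^sup>2) powr (-m) * x\<^sup>2)
              * indicator {-r<..<r} y \<partial>lborel) = ennreal r * (ennreal C * ennreal (Beta (1/2) (p+1) * hyp2F1 (m/2) ((m+1)/2) (p + 3/2) (u\<^sup>2)))" .
  have rr: "r * C = (1 - x\<^sup>2) powr (p + 1/2) * D powr (-m) * x\<^sup>2"
  proof -
    have "r = (1 - x\<^sup>2) powr (1/2)" unfolding r_def using x2 by (simp add: powr_half_sqrt)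
    then have "r * (r\<^sup>2) powr p = (1 - x\<^sup>2) powr (p + 1/2)" using r2 x2 by (simp add: powr_add)
    then show ?thesis unfolding C_def by (simp add: mult.assoc)
  qed
  have hnn: "Beta (1/2) (p+1) * hyp2F1 (m/2) ((m+1)/2) (p + 3/2) (u\<^sup>2) \<ge> 0"
    using t_series[OF m pm u0 u1, THEN conjunct2] pm by (simp add: Beta_def)
  show ?thesis
    using 1 rr hnn r C0 unfolding r_def[symmetric] D_def[symmetric] u_def[symmetric]
    by (simp add: ennreal_mult[symmetric] mult.assoc del: ennreal_mult)
qed

lemma hyp2F1_measurable[measurable]: "hyp2F1 a b c \<in> borel_measurable borel"
  unfolding hyp2F1_def[abs_def] by measurable

lemma slice2:
  fixes p x K :: real and j :: nat
  assumes p: "p > -1" and x: "-1 < x" "x < 1" and K: "K \<ge> 0"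
  shows "(\<integral>\<^sup>+y. ennreal ((1 - x\<^sup>2 - y\<^sup>2) powr p * K * y^(2*j)) * indicator {-sqrt (1 - x\<^sup>2)<..<sqrt (1 - x\<^sup>2)} y \<partial>lborel)
       = ennreal ((1 - x\<^sup>2) powr (p + 1/2 + real j) * K * Beta (real j + 1/2) (p+1))"
proof -
  define r where "r = sqrt (1 - x\<^sup>2)"
  have x2: "x\<^sup>2 < 1" using x by (simp add: abs_less_iff abs_square_less_1)
  have r: "r > 0" unfolding r_def using x2 by simp
  have r2: "r\<^sup>2 = 1 - x\<^sup>2" unfolding r_def using x2 by simp
  define C where "C = (r\<^sup>2) powr p * K * r^(2*j)"
  have C0: "C \<ge> 0" unfolding C_def using K r by simp
  have "(\<integral>\<^sup>+y. ennreal ((1 - x\<^sup>2 - y\<^sup>2) powr p * K * y^(2*j)) * indicator {-r<..<r} y \<partial>lborel)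
      = ennreal r * (\<integral>\<^sup>+t. ennreal ((1 - x\<^sup>2 - (r*t)\<^sup>2) powr p * K * (r*t)^(2*j)) * indicator {-1<..<1} t \<partial>lborel)"
    by (rule scale_int[OF r]) measurable
  also have "(\<integral>\<^sup>+t. ennreal ((1 - x\<^sup>2 - (r*t)\<^sup>2) powr p * K * (r*t)^(2*j)) * indicator {-1<..<1} t \<partial>lborel)
      = (\<integral>\<^sup>+t. ennreal C * (ennreal (t^(2*j) * (1 - t\<^sup>2) powr p) * indicator {-1<..<1} t) \<partial>lborel)"
  proof (rule nn_integral_cong)
    fix t :: real
    show "ennreal ((1 - x\<^sup>2 - (r*t)\<^sup>2) powr p * K * (r*t)^(2*j)) * indicator {-1<..<1} t
        = ennreal C * (ennreal (t^(2*j) * (1 - t\<^sup>2) powr p) * indicator {-1<..<1} t)"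
    proof (cases "t \<in> {-1<..<1}")
      case True
      then have t: "\<bar>t\<bar> < 1" by auto
      have e1: "1 - x\<^sup>2 - (r*t)\<^sup>2 = r\<^sup>2 * (1 - t\<^sup>2)" using r2 by (simp add: algebra_simps power_mult_distrib)
      have t2: "1 - t\<^sup>2 \<ge> 0" using t by (simp add: abs_square_le_1 less_imp_le)
      have "(1 - x\<^sup>2 - (r*t)\<^sup>2) powr p * K * (r*t)^(2*j) = C * (t^(2*j) * (1 - t\<^sup>2) powr p)"
        unfolding e1 C_def using t2 by (simp add: powr_mult power_mult_distrib mult_ac)
      then show ?thesis using True C0 t2 by (simp add: ennreal_mult mult.assoc)
    qed simp
  qed
  also have "\<dots> = ennreal C * ennreal (Beta (real j + 1/2) (p+1))"
    by (subst nn_integral_cmult) (simp_all add: moment[OF p])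
  finally have 1: "(\<integral>\<^sup>+y. ennreal ((1 - x\<^sup>2 - y\<^sup>2) powr p * K * y^(2*j)) * indicator {-r<..<r} y \<partial>lborel)
      = ennreal r * (ennreal C * ennreal (Beta (real j + 1/2) (p+1)))" .
  have rr: "r * C = (1 - x\<^sup>2) powr (p + 1/2 + real j) * K"
  proof -
    have rh: "r = (1 - x\<^sup>2) powr (1/2)" unfolding r_def using x2 by (simp add: powr_half_sqrt)
    have "r^(2*j) = (1 - x\<^sup>2) powr (real j)" using r2 x2 by (simp add: power_mult powr_realpow)
    then have "r * (r\<^sup>2) powr p * r^(2*j) = (1 - x\<^sup>2) powr (1/2) * (1 - x\<^sup>2) powr p * (1 - x\<^sup>2) powr (real j)"
      using r2 rh by simp
    also have "\<dots> = (1 - x\<^sup>2) powr (p + 1/2 + real j)" using x2 by (simp add: powr_add)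
    finally show ?thesis unfolding C_def by (simp add: mult_ac)
  qed
  have bnn: "Beta (real j + 1/2) (p+1) \<ge> 0" using p by (simp add: Beta_def)
  have rr2: "r * (C * Beta (real j + 1/2) (p+1)) = (1 - x\<^sup>2) powr (p + 1/2 + real j) * (K * Beta (real j + 1/2) (p+1))"
    using rr by (metis mult.assoc)
  show ?thesis
    using 1 rr2 bnn r C0 unfolding r_def[symmetric]
    by (simp add: ennreal_mult[symmetric] mult.assoc del: ennreal_mult)
qed

lemma key_ineq:
  fixes \<rho> c s x :: real
  assumes \<rho>: "0 \<le> \<rho>" "\<rho> \<le> 1" and cs: "c\<^sup>2 + s\<^sup>2 = 1" and s: "s \<ge> 0"
    and x: "-1 < x" "x < 1" and ne: "\<rho> < 1 \<or> x \<noteq> c"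
  shows "2 * \<rho> * s * sqrt (1 - x\<^sup>2) < 1 - 2 * \<rho> * (x * c) + \<rho>\<^sup>2"
proof -
  define r where "r = sqrt (1 - x\<^sup>2)"
  have x2: "x\<^sup>2 < 1" using x by (simp add: abs_less_iff abs_square_less_1)
  have r2: "r\<^sup>2 = 1 - x\<^sup>2" unfolding r_def using x2 by simp
  have sq: "(x - c)\<^sup>2 + (r - s)\<^sup>2 = 2 - 2 * (x * c + r * s)"
    using r2 cs by (simp add: power2_diff algebra_simps)
  have le: "x * c + r * s \<le> 1" using sq by (smt (verit) zero_le_power2)
  have eq: "1 - 2 * \<rho> * (x * c) + \<rho>\<^sup>2 - 2 * \<rho> * s * r = (1 - \<rho>)\<^sup>2 + 2 * \<rho> * (1 - (x * c + r * s))"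
    by (simp add: power2_diff algebra_simps)
  show ?thesis
  proof (cases "\<rho> < 1")
    case True
    have "(1 - \<rho>)\<^sup>2 > 0" using True by simp
    moreover have "2 * \<rho> * (1 - (x * c + r * s)) \<ge> 0" using \<rho> le by simp
    ultimately show ?thesis using eq unfolding r_def by linarith
  next
    case False
    then have "\<rho> = 1" "x \<noteq> c" using \<rho> ne by auto
    then have "(x - c)\<^sup>2 > 0" by simp
    then have "x * c + r * s < 1" using sq by (smt (verit) zero_le_power2)
    then have "2 * \<rho> * (1 - (x * c + r * s)) > 0" using \<open>\<rho> = 1\<close> by simp
    then show ?thesis using eq unfolding r_def by (smt (verit) zero_le_power2)
  qed
qed

lemma fin_int:
  fixes m \<rho> :: real
  assumes m: "m \<ge> 1/2" and \<rho>: "0 \<le> \<rho>" "\<rho> \<le> 1"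
  shows "(\<integral>\<^sup>+x. ennreal ((1 - x\<^sup>2) powr (m - 1/2) * (1 - 2 * \<rho> * x + \<rho>\<^sup>2) powr (-m)) * indicator {-1<..<1} x \<partial>lborel) < top"
proof -
  have "(\<integral>\<^sup>+x. ennreal ((1 - x\<^sup>2) powr (m - 1/2) * (1 - 2 * \<rho> * x + \<rho>\<^sup>2) powr (-m)) * indicator {-1<..<1} x \<partial>lborel)
     \<le> (\<integral>\<^sup>+x. ennreal (4 powr m) * (ennreal (x^(2*0) * (1 - x\<^sup>2) powr (-1/2)) * indicator {-1<..<1} x) \<partial>lborel)"
  proof (rule nn_integral_mono)
    fix x :: real
    show "ennreal ((1 - x\<^sup>2) powr (m - 1/2) * (1 - 2 * \<rho> * x + \<rho>\<^sup>2) powr (-m)) * indicator {-1<..<1} x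
       \<le> ennreal (4 powr m) * (ennreal (x^(2*0) * (1 - x\<^sup>2) powr (-1/2)) * indicator {-1<..<1} x)"
    proof (cases "x \<in> {-1<..<1}")
      case True
      then have x: "-1 < x" "x < 1" by auto
      define b where "b = 1 - 2 * \<rho> * x + \<rho>\<^sup>2"
      have "2 * b - (1 - x) = (1 + x) * (1 - \<rho>)\<^sup>2 + (1 - x) * (\<rho>\<^sup>2 + 2 * \<rho>)"
        unfolding b_def by (simp add: power2_eq_square algebra_simps)
      moreover have "(1 + x) * (1 - \<rho>)\<^sup>2 \<ge> 0" "(1 - x) * (\<rho>\<^sup>2 + 2 * \<rho>) \<ge> 0"
        using x \<rho> by auto
      ultimately have "2 * b - (1 - x) \<ge> 0" by (metis add_nonneg_nonneg)
      then have bge: "b \<ge> (1 - x) / 2" by (simp add: field_simps)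
      have hx: "(1 - x) / 2 > 0" using x by simp
      have x2: "1 - x\<^sup>2 > 0" using x by (simp add: abs_less_iff abs_square_less_1)
      have 1: "b powr (-m) \<le> ((1 - x) / 2) powr (-m)"
        using bge hx m by (intro powr_mono2') auto
      have 2: "(1 - x\<^sup>2) powr m * ((1 - x) / 2) powr (-m) = (2 * (1 + x)) powr m"
      proof -
        have "(1 - x\<^sup>2) powr m * ((1 - x) / 2) powr (-m) = (1 - x\<^sup>2) powr m / ((1 - x) / 2) powr m"
          by (simp add: powr_minus_divide)
        also have "\<dots> = ((1 - x\<^sup>2) / ((1 - x) / 2)) powr m"
          by (rule powr_divide[symmetric])
        also have "(1 - x\<^sup>2) / ((1 - x) / 2) = 2 * (1 + x)"
          using hx by (simp add: field_simps power2_eq_square)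
        finally show ?thesis .
      qed
      have 3: "(2 * (1 + x)) powr m \<le> 4 powr m" using x m by (intro powr_mono2) auto
      have "(1 - x\<^sup>2) powr (m - 1/2) * b powr (-m) = (1 - x\<^sup>2) powr m * b powr (-m) * (1 - x\<^sup>2) powr (-1/2)"
        using x2 by (simp add: powr_add[symmetric])
      also have "\<dots> \<le> (1 - x\<^sup>2) powr m * ((1 - x) / 2) powr (-m) * (1 - x\<^sup>2) powr (-1/2)"
        using 1 by (intro mult_right_mono mult_left_mono) auto
      also have "\<dots> \<le> 4 powr m * (1 - x\<^sup>2) powr (-1/2)"
        unfolding 2 using 3 by (intro mult_right_mono) auto
      finally have "(1 - x\<^sup>2) powr (m - 1/2) * b powr (-m) \<le> 4 powr m * (1 - x\<^sup>2) powr (-1/2)" .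
      then show ?thesis using True unfolding b_def
        by (simp add: ennreal_mult[symmetric] del: ennreal_mult)
    qed simp
  qed
  also have "\<dots> = ennreal (4 powr m) * ennreal (Beta (real 0 + 1/2) (-1/2 + 1))"
    by (subst nn_integral_cmult) (simp_all only: moment[of "-1/2" 0], simp_all)
  also have "\<dots> < top" by (simp add: ennreal_mult_less_top)
  finally show ?thesis .
qed

theorem lemma4:
  fixes n :: nat and \<rho> \<alpha> :: real
  assumes "n \<ge> 3" and "0 \<le> \<rho>" and "\<rho> \<le> 1" and "0 \<le> \<alpha>" and "\<alpha> \<le> pi / 2"
  shows "integral {-1..1} (\<lambda>x::real.
            x\<^sup>2 * (1 - x\<^sup>2) powr ((real n - 3) / 2)
            / (1 + \<rho>\<^sup>2 - 2 * \<rho> * x * cos \<alpha>) powr (real n / 2 - 1)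
            * hyp2F1 ((real n - 2) / 4) (real n / 4) ((real n - 1) / 2)
                (4 * \<rho>\<^sup>2 * (sin \<alpha>)\<^sup>2 * (1 - x\<^sup>2) / (1 + \<rho>\<^sup>2 - 2 * \<rho> * x * cos \<alpha>)\<^sup>2))
       = (sin \<alpha>)\<^sup>2 / (real n - 1)
           * integral {-1..1} (\<lambda>x::real. (1 - x\<^sup>2) powr ((real n - 1) / 2)
                                 * (1 - 2 * \<rho> * x + \<rho>\<^sup>2) powr (1 - real n / 2))
         + (cos \<alpha>)\<^sup>2
           * integral {-1..1} (\<lambda>x::real. x\<^sup>2 * (1 - x\<^sup>2) powr ((real n - 3) / 2)
                                 * (1 - 2 * \<rho> * x + \<rho>\<^sup>2) powr (1 - real n / 2))"
  (is "integral _ ?f = _ * integral _ ?g1 + _ * integral _ ?g2")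
proof -
  note n = assms(1) and \<rho> = assms(2,3) and \<alpha> = assms(4,5)
  define m where "m = real n / 2 - 1"
  define p where "p = m - 1"
  define c where "c = cos \<alpha>"
  define s where "s = sin \<alpha>"
  have m: "m \<ge> 1/2" "m > 0" unfolding m_def using n by auto
  have pm: "p > -1" unfolding p_def using m by simp
  have e1: "(real n - 3) / 2 = p + 1/2" "(real n - 1) / 2 = p + 3/2" "1 - real n / 2 = - m"
    "real n / 2 - 1 = m" "(real n - 2) / 4 = m / 2" "real n / 4 = (m + 1) / 2" "(real n - 1) / 2 = m + 1/2"
    "(real n - 3) / 2 = m - 1/2"
    unfolding p_def m_def by (simp_all add: field_simps)
  have cs: "c\<^sup>2 + s\<^sup>2 = 1" unfolding c_def s_def by simp
  have c0: "c \<ge> 0" unfolding c_def using \<alpha> by (intro cos_ge_zero) auto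
  have s0: "s \<ge> 0" unfolding s_def using \<alpha> by (intro sin_ge_zero) auto
  define Bt where "Bt = Beta (1/2) (p+1)"
  have Bt: "Bt > 0" unfolding Bt_def Beta_def using pm by simp
  define K where "K v = (1 - 2 * \<rho> * v + \<rho>\<^sup>2) powr (-m)" for v
  have K0: "K v \<ge> 0" for v unfolding K_def by simp
  define f' where "f' x = (if x = c then 0 else ?f x)" for x
  define P where "P = (lborel \<Otimes>\<^sub>M lborel :: (real \<times> real) measure)"
  define \<Phi> where "\<Phi> z = (if (fst z)\<^sup>2 + (snd z)\<^sup>2 < 1 then ennreal ((1 - (fst z)\<^sup>2 - (snd z)\<^sup>2) powr p * K (fst z * c + snd z * s) * (fst z)\<^sup>2) else 0)" for z
  define \<Psi>m where "\<Psi>m z = (if (fst z)\<^sup>2 + (snd z)\<^sup>2 < 1 then ennreal ((1 - (fst z)\<^sup>2 - (snd z)\<^sup>2) powr p * K (fst z) * (fst z * c - snd z * s)\<^sup>2) else 0)" for z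
  define \<Psi>p where "\<Psi>p z = (if (fst z)\<^sup>2 + (snd z)\<^sup>2 < 1 then ennreal ((1 - (fst z)\<^sup>2 - (snd z)\<^sup>2) powr p * K (fst z) * (fst z * c + snd z * s)\<^sup>2) else 0)" for z
  define A where "A z = (if (fst z)\<^sup>2 + (snd z)\<^sup>2 < 1 then ennreal ((1 - (fst z)\<^sup>2 - (snd z)\<^sup>2) powr p * K (fst z) * (fst z)\<^sup>2) else 0)" for z
  define Bf where "Bf z = (if (fst z)\<^sup>2 + (snd z)\<^sup>2 < 1 then ennreal ((1 - (fst z)\<^sup>2 - (snd z)\<^sup>2) powr p * K (fst z) * (snd z)\<^sup>2) else 0)" for z
  have Km[measurable]: "K \<in> borel_measurable borel" unfolding K_def by measurable
  have [measurable]: "\<Phi> \<in> borel_measurable P" unfolding \<Phi>_def P_def by measurable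
  have [measurable]: "\<Psi>m \<in> borel_measurable P" unfolding \<Psi>m_def P_def by measurable
  have [measurable]: "\<Psi>p \<in> borel_measurable P" unfolding \<Psi>p_def P_def by measurable
  have [measurable]: "A \<in> borel_measurable P" unfolding A_def P_def by measurable
  have [measurable]: "Bf \<in> borel_measurable P" unfolding Bf_def P_def by measurable
  define L where "L = (\<integral>\<^sup>+x. ennreal (f' x) * indicator {-1..1} x \<partial>lborel)"
  define R1 where "R1 = (\<integral>\<^sup>+x. ennreal (?g1 x) * indicator {-1<..<1} x \<partial>lborel)"
  define R2 where "R2 = (\<integral>\<^sup>+x. ennreal (?g2 x) * indicator {-1<..<1} x \<partial>lborel)"

  have disk: "(x\<^sup>2 + y\<^sup>2 < 1) = (y \<in> {-sqrt (1 - x\<^sup>2)<..<sqrt (1 - x\<^sup>2)})" for x y :: real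
  proof -
    have "(x\<^sup>2 + y\<^sup>2 < 1) = (y\<^sup>2 < 1 - x\<^sup>2)" by auto
    also have "\<dots> = (sqrt (y\<^sup>2) < sqrt (1 - x\<^sup>2))" by (simp only: real_sqrt_less_iff)
    also have "\<dots> = (\<bar>y\<bar> < sqrt (1 - x\<^sup>2))" by simp
    finally show ?thesis by auto
  qed
  have pt: "?f x \<ge> 0 \<and> ennreal Bt * ennreal (?f x) = (\<integral>\<^sup>+y. \<Phi> (x, y) \<partial>lborel)"
    if x: "-1 < x" "x < 1" "x \<noteq> c" for x
  proof -
    have ne: "\<rho> < 1 \<or> x \<noteq> c" using x(3) by simp
    note lt = key_ineq[OF \<rho>(1) \<rho>(2) cs s0 x(1) x(2) ne]
    define D where "D = 1 - 2 * \<rho> * (x * c) + \<rho>\<^sup>2"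
    define u where "u = 2 * \<rho> * s * sqrt (1 - x\<^sup>2) / D"
    have x2: "1 - x\<^sup>2 > 0" using x by (simp add: abs_square_less_1 abs_less_iff)
    have sq0: "2 * \<rho> * s * sqrt (1 - x\<^sup>2) \<ge> 0" using \<rho> s0 x2 by simp
    have D: "D > 0" using lt sq0 unfolding D_def by linarith
    have u0: "u \<ge> 0" unfolding u_def using sq0 D by simp
    have u1: "u < 1" unfolding u_def using lt D by (simp add: D_def)
    have H: "0 \<le> hyp2F1 (m/2) ((m+1)/2) (p+3/2) (u\<^sup>2)" using t_series[OF m(2) pm u0 u1] by simp
    have Deq: "1 + \<rho>\<^sup>2 - 2 * \<rho> * x * cos \<alpha> = D" unfolding D_def c_def by simp
    have zeq: "4 * \<rho>\<^sup>2 * (sin \<alpha>)\<^sup>2 * (1 - x\<^sup>2) / D\<^sup>2 = u\<^sup>2"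
      unfolding u_def s_def using x2 by (simp add: power_divide power_mult_distrib)
    have fx: "?f x = x\<^sup>2 * (1 - x\<^sup>2) powr (p + 1/2) / D powr m * hyp2F1 (m/2) ((m+1)/2) (p+3/2) (u\<^sup>2)"
      by (simp only: e1(1) e1(4) e1(5) e1(6) e1(2) Deq zeq)
    have f0: "?f x \<ge> 0" unfolding fx using H D by simp
    have "ennreal Bt * ennreal (?f x) = ennreal (Bt * ?f x)"
      by (rule ennreal_mult[symmetric]) (use Bt f0 in auto)
    also have "Bt * ?f x = (1 - x\<^sup>2) powr (p + 1/2) * D powr (-m) * x\<^sup>2 * Bt * hyp2F1 (m/2) ((m+1)/2) (p+3/2) (u\<^sup>2)"
      unfolding fx by (simp add: powr_minus_divide)
    also have "ennreal \<dots> = (\<integral>\<^sup>+y. ennreal ((1 - x\<^sup>2 - y\<^sup>2) powr p * (1 - 2 * \<rho> * (x * c + y * s) + \<rho>\<^sup>2) powr (-m) * x\<^sup>2)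
              * indicator {-sqrt (1 - x\<^sup>2)<..<sqrt (1 - x\<^sup>2)} y \<partial>lborel)"
      unfolding D_def u_def Bt_def by (rule slice[OF m(2) p_def \<rho>(1) \<rho>(2) cs s0 x(1) x(2) lt, symmetric])
    also have "\<dots> = (\<integral>\<^sup>+y. \<Phi> (x, y) \<partial>lborel)"
    proof (rule nn_integral_cong)
      fix y :: real
      show "ennreal ((1 - x\<^sup>2 - y\<^sup>2) powr p * (1 - 2 * \<rho> * (x * c + y * s) + \<rho>\<^sup>2) powr (-m) * x\<^sup>2)
              * indicator {-sqrt (1 - x\<^sup>2)<..<sqrt (1 - x\<^sup>2)} y = \<Phi> (x, y)"
      proof (cases "x\<^sup>2 + y\<^sup>2 < 1")
        case True
        then have "y \<in> {-sqrt (1 - x\<^sup>2)<..<sqrt (1 - x\<^sup>2)}" using disk[of x y] by simp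
        then show ?thesis using True by (simp add: \<Phi>_def K_def)
      next
        case False
        then have "y \<notin> {-sqrt (1 - x\<^sup>2)<..<sqrt (1 - x\<^sup>2)}" using disk[of x y] by simp
        then show ?thesis using False by (simp add: \<Phi>_def K_def)
      qed
    qed
    finally show ?thesis using f0 by simp
  qed

  have f'm[measurable]: "f' \<in> borel_measurable borel" unfolding f'_def by measurable
  have f'nn: "f' x \<ge> 0" if "x \<in> {-1..1}" for x
  proof (cases "x = c \<or> x = -1 \<or> x = 1")
    case True
    then show ?thesis unfolding f'_def by auto
  next
    case False
    then show ?thesis using pt[of x] that unfolding f'_def by auto
  qed
  have a: "integral {-1..1} ?f = enn2real L"
  proof -
    have "integral {-1..1} ?f = integral {-1..1} f'"
      by (rule integral_spike[of "{c}"]) (auto simp: f'_def)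
    also have "\<dots> = enn2real L" unfolding L_def
      by (rule integral_eq_nn) (use f'nn in auto)
    finally show ?thesis .
  qed
  have b1: "integral {-1..1} ?g1 = enn2real R1"
  proof -
    have "integral {-1..1} ?g1 = enn2real (\<integral>\<^sup>+x. ennreal (?g1 x) * indicator {-1..1} x \<partial>lborel)"
      by (rule integral_eq_nn) auto
    also have "(\<integral>\<^sup>+x. ennreal (?g1 x) * indicator {-1..1} x \<partial>lborel) = R1" unfolding R1_def
      by (rule nn_integral_cong_AE)
         (use AE_lborel_singleton[of "-1"] AE_lborel_singleton[of 1] in \<open>eventually_elim, auto simp: indicator_def\<close>)
    finally show ?thesis .
  qed
  have b2: "integral {-1..1} ?g2 = enn2real R2"
  proof -
    have "integral {-1..1} ?g2 = enn2real (\<integral>\<^sup>+x. ennreal (?g2 x) * indicator {-1..1} x \<partial>lborel)"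
      by (rule integral_eq_nn) auto
    also have "(\<integral>\<^sup>+x. ennreal (?g2 x) * indicator {-1..1} x \<partial>lborel) = R2" unfolding R2_def
      by (rule nn_integral_cong_AE)
         (use AE_lborel_singleton[of "-1"] AE_lborel_singleton[of 1] in \<open>eventually_elim, auto simp: indicator_def\<close>)
    finally show ?thesis .
  qed
  have outside: "\<not> (x\<^sup>2 + y\<^sup>2 < 1)" if "x \<notin> {-1<..<1}" for x y :: real
  proof -
    have "\<not> (\<bar>x\<bar> < 1)" using that by auto
    then have "\<not> (x\<^sup>2 < 1)" by (simp add: abs_square_less_1)
    moreover have "y\<^sup>2 \<ge> 0" by simp
    ultimately show ?thesis by linarith
  qed
  have \<Phi>P: "\<Phi> \<in> borel_measurable (lborel \<Otimes>\<^sub>M lborel)" using \<open>\<Phi> \<in> borel_measurable P\<close> unfolding P_def .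
  have cd: "ennreal Bt * L = (\<integral>\<^sup>+z. \<Phi> z \<partial>P)"
  proof -
    have "ennreal Bt * L = (\<integral>\<^sup>+x. ennreal Bt * (ennreal (f' x) * indicator {-1..1} x) \<partial>lborel)"
      unfolding L_def by (rule nn_integral_cmult[symmetric]) measurable
    also have "\<dots> = (\<integral>\<^sup>+x. \<integral>\<^sup>+y. \<Phi> (x, y) \<partial>lborel \<partial>lborel)"
    proof (rule nn_integral_cong_AE)
      show "AE x in lborel. ennreal Bt * (ennreal (f' x) * indicator {-1..1} x) = (\<integral>\<^sup>+y. \<Phi> (x, y) \<partial>lborel)"
        using AE_lborel_singleton[of "-1"] AE_lborel_singleton[of 1] AE_lborel_singleton[of c]
      proof eventually_elim
        case (elim x)
        show ?case
        proof (cases "x \<in> {-1<..<1}")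
          case True
          then have "f' x = ?f x" using elim by (simp add: f'_def)
          then show ?thesis using pt[of x] True elim by simp
        next
          case False
          then have "\<Phi> (x, y) = 0" for y using outside[of x y] by (simp add: \<Phi>_def)
          moreover have "x \<notin> {-1..1}" using False elim by auto
          ultimately show ?thesis by simp
        qed
      qed
    qed
    also have "\<dots> = (\<integral>\<^sup>+z. \<Phi> z \<partial>P)" unfolding P_def by (rule lborel.nn_integral_fst[OF \<Phi>P])
    finally show ?thesis .
  qed
  have e: "(\<integral>\<^sup>+z. \<Phi> z \<partial>P) = (\<integral>\<^sup>+z. \<Psi>m z \<partial>P)"
  proof -
    have rot: "(\<integral>\<^sup>+z. \<Phi> (fst z * c - snd z * s, fst z * s + snd z * c) \<partial>P) = (\<integral>\<^sup>+z. \<Phi> z \<partial>P)"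
    proof (cases "s = 0")
      case True
      then have "c\<^sup>2 = 1" using cs by simp
      then have "c = 1" using c0 by (simp add: power2_eq_1_iff)
      then show ?thesis using True by simp
    next
      case False
      show ?thesis unfolding P_def by (rule rotation_inv[OF \<Phi>P cs False])
    qed
    have pw: "\<Phi> (fst z * c - snd z * s, fst z * s + snd z * c) = \<Psi>m z" for z
    proof -
      obtain x y where z: "z = (x, y)" by (cases z)
      have "(x * c - y * s)\<^sup>2 + (x * s + y * c)\<^sup>2 = (x\<^sup>2 + y\<^sup>2) * (c\<^sup>2 + s\<^sup>2)"
        by (simp add: power2_eq_square algebra_simps)
      then have 1: "(x * c - y * s)\<^sup>2 + (x * s + y * c)\<^sup>2 = x\<^sup>2 + y\<^sup>2" using cs by simp
      have 3: "1 - (x * c - y * s)\<^sup>2 - (x * s + y * c)\<^sup>2 = 1 - x\<^sup>2 - y\<^sup>2" using 1 by linarith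
      have "(x * c - y * s) * c + (x * s + y * c) * s = x * (c\<^sup>2 + s\<^sup>2)"
        by (simp add: power2_eq_square algebra_simps)
      then have 2: "(x * c - y * s) * c + (x * s + y * c) * s = x" using cs by simp
      show ?thesis unfolding z \<Phi>_def \<Psi>m_def fst_conv snd_conv 1 2 3 ..
    qed
    show ?thesis using rot pw by simp
  qed
  have \<Psi>pP: "\<Psi>p \<in> borel_measurable (lborel \<Otimes>\<^sub>M lborel)" using \<open>\<Psi>p \<in> borel_measurable P\<close> unfolding P_def .
  have f: "(\<integral>\<^sup>+z. \<Psi>m z \<partial>P) = (\<integral>\<^sup>+z. \<Psi>p z \<partial>P)"
  proof -
    have "(\<integral>\<^sup>+z. \<Psi>m z \<partial>P) = (\<integral>\<^sup>+z. \<Psi>p (fst z, - snd z) \<partial>P)"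
      by (rule nn_integral_cong) (simp add: \<Psi>m_def \<Psi>p_def)
    also have "\<dots> = (\<integral>\<^sup>+z. \<Psi>p z \<partial>P)" unfolding P_def by (rule refl_y[OF \<Psi>pP])
    finally show ?thesis .
  qed
  have g: "(\<integral>\<^sup>+z. \<Psi>m z \<partial>P) + (\<integral>\<^sup>+z. \<Psi>p z \<partial>P) = ennreal (2 * c\<^sup>2) * (\<integral>\<^sup>+z. A z \<partial>P) + ennreal (2 * s\<^sup>2) * (\<integral>\<^sup>+z. Bf z \<partial>P)"
  proof -
    have pw: "\<Psi>m z + \<Psi>p z = ennreal (2 * c\<^sup>2) * A z + ennreal (2 * s\<^sup>2) * Bf z" for z
    proof (cases "(fst z)\<^sup>2 + (snd z)\<^sup>2 < 1")
      case True
      define w where "w = (1 - (fst z)\<^sup>2 - (snd z)\<^sup>2) powr p * K (fst z)"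
      have w0: "w \<ge> 0" using K0 by (simp add: w_def)
      have "\<Psi>m z + \<Psi>p z = ennreal (w * (fst z * c - snd z * s)\<^sup>2) + ennreal (w * (fst z * c + snd z * s)\<^sup>2)"
        using True by (simp add: \<Psi>m_def \<Psi>p_def w_def)
      also have "\<dots> = ennreal (w * (fst z * c - snd z * s)\<^sup>2 + w * (fst z * c + snd z * s)\<^sup>2)"
        by (rule ennreal_plus[symmetric]) (use w0 in auto)
      also have "w * (fst z * c - snd z * s)\<^sup>2 + w * (fst z * c + snd z * s)\<^sup>2
           = 2 * c\<^sup>2 * (w * (fst z)\<^sup>2) + 2 * s\<^sup>2 * (w * (snd z)\<^sup>2)"
        by (simp add: power2_eq_square algebra_simps)
      also have "ennreal \<dots> = ennreal (2 * c\<^sup>2 * (w * (fst z)\<^sup>2)) + ennreal (2 * s\<^sup>2 * (w * (snd z)\<^sup>2))"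
        by (rule ennreal_plus) (use w0 in auto)
      also have "\<dots> = ennreal (2 * c\<^sup>2) * ennreal (w * (fst z)\<^sup>2) + ennreal (2 * s\<^sup>2) * ennreal (w * (snd z)\<^sup>2)"
        using w0 by (simp add: ennreal_mult)
      also have "\<dots> = ennreal (2 * c\<^sup>2) * A z + ennreal (2 * s\<^sup>2) * Bf z"
        using True by (simp add: A_def Bf_def w_def)
      finally show ?thesis .
    next
      case False
      then show ?thesis by (simp add: \<Psi>m_def \<Psi>p_def A_def Bf_def)
    qed
    have "(\<integral>\<^sup>+z. \<Psi>m z \<partial>P) + (\<integral>\<^sup>+z. \<Psi>p z \<partial>P) = (\<integral>\<^sup>+z. \<Psi>m z + \<Psi>p z \<partial>P)"
      by (rule nn_integral_add[symmetric]) measurable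
    also have "\<dots> = (\<integral>\<^sup>+z. ennreal (2 * c\<^sup>2) * A z + ennreal (2 * s\<^sup>2) * Bf z \<partial>P)"
      by (simp add: pw)
    also have "\<dots> = (\<integral>\<^sup>+z. ennreal (2 * c\<^sup>2) * A z \<partial>P) + (\<integral>\<^sup>+z. ennreal (2 * s\<^sup>2) * Bf z \<partial>P)"
      by (rule nn_integral_add) measurable
    also have "\<dots> = ennreal (2 * c\<^sup>2) * (\<integral>\<^sup>+z. A z \<partial>P) + ennreal (2 * s\<^sup>2) * (\<integral>\<^sup>+z. Bf z \<partial>P)"
      by (simp add: nn_integral_cmult)
    finally show ?thesis .
  qed
  have AP: "A \<in> borel_measurable (lborel \<Otimes>\<^sub>M lborel)" using \<open>A \<in> borel_measurable P\<close> unfolding P_def .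
  have BfP: "Bf \<in> borel_measurable (lborel \<Otimes>\<^sub>M lborel)" using \<open>Bf \<in> borel_measurable P\<close> unfolding P_def .
  have inner: "(\<integral>\<^sup>+y. (if x\<^sup>2 + y\<^sup>2 < 1 then ennreal ((1 - x\<^sup>2 - y\<^sup>2) powr p * Kx * y^(2*j)) else 0) \<partial>lborel)
      = ennreal ((1 - x\<^sup>2) powr (p + 1/2 + real j) * Kx * Beta (real j + 1/2) (p+1))"
    if x: "-1 < x" "x < 1" and Kx: "Kx \<ge> 0" for x Kx :: real and j :: nat
  proof -
    have "(\<integral>\<^sup>+y. (if x\<^sup>2 + y\<^sup>2 < 1 then ennreal ((1 - x\<^sup>2 - y\<^sup>2) powr p * Kx * y^(2*j)) else 0) \<partial>lborel)
       = (\<integral>\<^sup>+y. ennreal ((1 - x\<^sup>2 - y\<^sup>2) powr p * Kx * y^(2*j)) * indicator {-sqrt (1 - x\<^sup>2)<..<sqrt (1 - x\<^sup>2)} y \<partial>lborel)"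
    proof (rule nn_integral_cong)
      fix y :: real
      show "(if x\<^sup>2 + y\<^sup>2 < 1 then ennreal ((1 - x\<^sup>2 - y\<^sup>2) powr p * Kx * y^(2*j)) else 0)
          = ennreal ((1 - x\<^sup>2 - y\<^sup>2) powr p * Kx * y^(2*j)) * indicator {-sqrt (1 - x\<^sup>2)<..<sqrt (1 - x\<^sup>2)} y"
        using disk[of x y] by (simp add: indicator_def)
    qed
    also have "\<dots> = ennreal ((1 - x\<^sup>2) powr (p + 1/2 + real j) * Kx * Beta (real j + 1/2) (p+1))"
      by (rule slice2[OF pm x Kx])
    finally show ?thesis .
  qed
  have h: "(\<integral>\<^sup>+z. A z \<partial>P) = ennreal Bt * R2"
  proof -
    have "(\<integral>\<^sup>+z. A z \<partial>P) = (\<integral>\<^sup>+x. \<integral>\<^sup>+y. A (x, y) \<partial>lborel \<partial>lborel)"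
      unfolding P_def by (rule lborel.nn_integral_fst[OF AP, symmetric])
    also have "\<dots> = (\<integral>\<^sup>+x. ennreal Bt * (ennreal (?g2 x) * indicator {-1<..<1} x) \<partial>lborel)"
    proof (rule nn_integral_cong)
      fix x :: real
      show "(\<integral>\<^sup>+y. A (x, y) \<partial>lborel) = ennreal Bt * (ennreal (?g2 x) * indicator {-1<..<1} x)"
      proof (cases "x \<in> {-1<..<1}")
        case True
        have Kx: "K x * x\<^sup>2 \<ge> 0" using K0 by simp
        have "(\<integral>\<^sup>+y. A (x, y) \<partial>lborel) = (\<integral>\<^sup>+y. (if x\<^sup>2 + y\<^sup>2 < 1 then ennreal ((1 - x\<^sup>2 - y\<^sup>2) powr p * (K x * x\<^sup>2) * y^(2*0)) else 0) \<partial>lborel)"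
          by (rule nn_integral_cong) (simp add: A_def mult_ac)
        also have "\<dots> = ennreal ((1 - x\<^sup>2) powr (p + 1/2 + real 0) * (K x * x\<^sup>2) * Beta (real 0 + 1/2) (p+1))"
          using True by (intro inner Kx) auto
        also have "(1 - x\<^sup>2) powr (p + 1/2 + real 0) * (K x * x\<^sup>2) * Beta (real 0 + 1/2) (p+1) = Bt * ?g2 x"
          unfolding Bt_def K_def e1(1) e1(3) by (simp add: mult_ac)
        also have "ennreal (Bt * ?g2 x) = ennreal Bt * ennreal (?g2 x)"
          by (rule ennreal_mult) (use Bt in auto)
        finally show ?thesis using True by simp
      next
        case False
        then show ?thesis using outside[of x] by (simp add: A_def)
      qed
    qed
    also have "\<dots> = ennreal Bt * R2" unfolding R2_def by (rule nn_integral_cmult) measurable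
    finally show ?thesis .
  qed
  have Beta1: "Beta (real 1 + 1/2) (p+1) = Bt / (real n - 1)"
    using Beta_ratio[OF pm, of 1] unfolding Bt_def p_def m_def using n by (simp add: field_simps)
  have Bt1: "Bt / (real n - 1) \<ge> 0" using Bt n by simp
  have i: "(\<integral>\<^sup>+z. Bf z \<partial>P) = ennreal (Bt / (real n - 1)) * R1"
  proof -
    have "(\<integral>\<^sup>+z. Bf z \<partial>P) = (\<integral>\<^sup>+x. \<integral>\<^sup>+y. Bf (x, y) \<partial>lborel \<partial>lborel)"
      unfolding P_def by (rule lborel.nn_integral_fst[OF BfP, symmetric])
    also have "\<dots> = (\<integral>\<^sup>+x. ennreal (Bt / (real n - 1)) * (ennreal (?g1 x) * indicator {-1<..<1} x) \<partial>lborel)"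
    proof (rule nn_integral_cong)
      fix x :: real
      show "(\<integral>\<^sup>+y. Bf (x, y) \<partial>lborel) = ennreal (Bt / (real n - 1)) * (ennreal (?g1 x) * indicator {-1<..<1} x)"
      proof (cases "x \<in> {-1<..<1}")
        case True
        have "(\<integral>\<^sup>+y. Bf (x, y) \<partial>lborel) = (\<integral>\<^sup>+y. (if x\<^sup>2 + y\<^sup>2 < 1 then ennreal ((1 - x\<^sup>2 - y\<^sup>2) powr p * K x * y^(2*1)) else 0) \<partial>lborel)"
          by (rule nn_integral_cong) (simp add: Bf_def)
        also have "\<dots> = ennreal ((1 - x\<^sup>2) powr (p + 1/2 + real 1) * K x * Beta (real 1 + 1/2) (p+1))"
          using True K0 by (intro inner) auto
        also have "(1 - x\<^sup>2) powr (p + 1/2 + real 1) * K x * Beta (real 1 + 1/2) (p+1) = Bt / (real n - 1) * ?g1 x"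
        proof -
          have pp: "p + 1/2 + real 1 = p + 3/2" by simp
          show ?thesis unfolding Beta1 K_def e1(3) e1(2) pp by (simp add: mult_ac)
        qed
        also have "ennreal (Bt / (real n - 1) * ?g1 x) = ennreal (Bt / (real n - 1)) * ennreal (?g1 x)"
          by (rule ennreal_mult) (use Bt1 in auto)
        finally show ?thesis using True by simp
      next
        case False
        then show ?thesis using outside[of x] by (simp add: Bf_def)
      qed
    qed
    also have "\<dots> = ennreal (Bt / (real n - 1)) * R1" unfolding R1_def by (rule nn_integral_cmult) measurable
    finally show ?thesis .
  qed
  have R0: "(\<integral>\<^sup>+x. ennreal ((1 - x\<^sup>2) powr (m - 1/2) * (1 - 2 * \<rho> * x + \<rho>\<^sup>2) powr (-m)) * indicator {-1<..<1} x \<partial>lborel) < top"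
    by (rule fin_int[OF m(1) \<rho>])
  have j: "R1 < top" "R2 < top"
  proof -
    have "R1 \<le> (\<integral>\<^sup>+x. ennreal ((1 - x\<^sup>2) powr (m - 1/2) * (1 - 2 * \<rho> * x + \<rho>\<^sup>2) powr (-m)) * indicator {-1<..<1} x \<partial>lborel)"
      unfolding R1_def
    proof (rule nn_integral_mono)
      fix x :: real
      show "ennreal (?g1 x) * indicator {-1<..<1} x \<le> ennreal ((1 - x\<^sup>2) powr (m - 1/2) * (1 - 2 * \<rho> * x + \<rho>\<^sup>2) powr (-m)) * indicator {-1<..<1} x"
      proof (cases "x \<in> {-1<..<1}")
        case True
        then have x2: "0 \<le> 1 - x\<^sup>2" "1 - x\<^sup>2 \<le> 1" by (auto simp: abs_square_le_1 abs_le_iff)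
        have "(1 - x\<^sup>2) powr (m + 1/2) \<le> (1 - x\<^sup>2) powr (m - 1/2)"
          by (rule powr_mono') (use x2 in auto)
        then have "?g1 x \<le> (1 - x\<^sup>2) powr (m - 1/2) * (1 - 2 * \<rho> * x + \<rho>\<^sup>2) powr (-m)"
          unfolding e1(7) e1(3) by (intro mult_right_mono) auto
        then show ?thesis using True by (simp add: ennreal_leI)
      qed simp
    qed
    then show "R1 < top" using R0 by (rule le_less_trans)
    have "R2 \<le> (\<integral>\<^sup>+x. ennreal ((1 - x\<^sup>2) powr (m - 1/2) * (1 - 2 * \<rho> * x + \<rho>\<^sup>2) powr (-m)) * indicator {-1<..<1} x \<partial>lborel)"
      unfolding R2_def
    proof (rule nn_integral_mono)
      fix x :: real
      show "ennreal (?g2 x) * indicator {-1<..<1} x \<le> ennreal ((1 - x\<^sup>2) powr (m - 1/2) * (1 - 2 * \<rho> * x + \<rho>\<^sup>2) powr (-m)) * indicator {-1<..<1} x"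
      proof (cases "x \<in> {-1<..<1}")
        case True
        then have x2: "x\<^sup>2 \<le> 1" by (auto simp: abs_square_le_1 abs_le_iff)
        have "?g2 x = x\<^sup>2 * ((1 - x\<^sup>2) powr (m - 1/2) * (1 - 2 * \<rho> * x + \<rho>\<^sup>2) powr (-m))"
          unfolding e1(8) e1(3) by (simp add: mult_ac)
        also have "\<dots> \<le> 1 * ((1 - x\<^sup>2) powr (m - 1/2) * (1 - 2 * \<rho> * x + \<rho>\<^sup>2) powr (-m))"
          using x2 by (intro mult_right_mono) auto
        finally show ?thesis using True by (simp add: ennreal_leI)
      qed simp
    qed
    then show "R2 < top" using R0 by (rule le_less_trans)
  qed
  obtain r1 where r1: "R1 = ennreal r1" "r1 \<ge> 0" using j(1) by (cases R1) auto
  obtain r2 where r2: "R2 = ennreal r2" "r2 \<ge> 0" using j(2) by (cases R2) auto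
  have n1: "real n - 1 > 0" using n by simp
  define X where "X = c\<^sup>2 * Bt * r2 + s\<^sup>2 * (Bt / (real n - 1)) * r1"
  have X0: "X \<ge> 0" unfolding X_def using Bt r1 r2 n1 by simp
  have t1: "ennreal (2 * c\<^sup>2) * (ennreal Bt * ennreal r2) = ennreal (2 * (c\<^sup>2 * Bt * r2))"
    using Bt r2 by (simp add: ennreal_mult mult.assoc)
  have t2': "ennreal (2 * s\<^sup>2) * (ennreal q * ennreal r1) = ennreal (2 * (s\<^sup>2 * q * r1))" if "q \<ge> 0" for q
    using that r1 by (simp add: ennreal_mult mult.assoc)
  have q0: "Bt / (real n - 1) \<ge> 0" using Bt n1 by simp
  note t2 = t2'[OF q0]
  have t3: "ennreal (2 * (c\<^sup>2 * Bt * r2)) + ennreal (2 * (s\<^sup>2 * (Bt / (real n - 1)) * r1)) = ennreal (2 * X)"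
    unfolding X_def using Bt r1 r2 n1 by (simp add: ring_distribs)
  have "(\<integral>\<^sup>+z. \<Psi>m z \<partial>P) + (\<integral>\<^sup>+z. \<Psi>m z \<partial>P) = ennreal (2 * X)"
    using g unfolding f[symmetric] h i r1(1) r2(1) t1 t2 t3 .
  moreover have "ennreal (2 * X) = 2 * ennreal X" using X0 by (simp add: ennreal_mult)
  moreover have "2 * (\<integral>\<^sup>+z. \<Psi>m z \<partial>P) = (\<integral>\<^sup>+z. \<Psi>m z \<partial>P) + (\<integral>\<^sup>+z. \<Psi>m z \<partial>P)"
    by (rule mult_2)
  ultimately have "2 * (\<integral>\<^sup>+z. \<Psi>m z \<partial>P) = 2 * ennreal X" by simp
  then have "(\<integral>\<^sup>+z. \<Psi>m z \<partial>P) = ennreal X"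
    by (simp add: ennreal_mult_cancel_left)
  moreover have "X = Bt * (c\<^sup>2 * r2 + s\<^sup>2 / (real n - 1) * r1)"
    unfolding X_def by (simp add: algebra_simps)
  ultimately have "ennreal Bt * L = ennreal (Bt * (c\<^sup>2 * r2 + s\<^sup>2 / (real n - 1) * r1))"
    using cd e by simp
  also have "\<dots> = ennreal Bt * ennreal (c\<^sup>2 * r2 + s\<^sup>2 / (real n - 1) * r1)"
    using Bt r1 r2 n1 by (simp add: ennreal_mult)
  finally have "L = ennreal (c\<^sup>2 * r2 + s\<^sup>2 / (real n - 1) * r1)"
    using Bt by (simp add: ennreal_mult_cancel_left)
  moreover have Y0: "c\<^sup>2 * r2 + s\<^sup>2 / (real n - 1) * r1 \<ge> 0" using r1 r2 n1 by simp
  ultimately have "enn2real L = c\<^sup>2 * r2 + s\<^sup>2 / (real n - 1) * r1"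
    by (simp only: enn2real_ennreal)
  then show ?thesis unfolding a b1 b2 r1 r2 c_def s_def using r1 r2 by simp
qed

end
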